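(* Let $H_0,H_1$ be complex Hilbert spaces, $G$ a densely defined closed operator from $H_0$ into $H_1$ and $D$ a densely defined closed operator from $H_1$ into $H_0$ with $-G^*\subset D$. Let $a\in\mathcal L(H_1)$ and $m\in\mathcal L(H_0)$ be coercive and let $u_0\in\mathrm{BD}(G)$. Then there exists a unique $u\in\mathrm{dom}(DaG)$ such that $mu-DaGu=0$ and $u-u_0\in\mathrm{dom}(\mathring G)$.
   Context: $\mathring G=-D^*$, $\mathring D=-G^*$. Domains carry graph inner products, e.g. $(u,v)_{\mathrm{dom}(G)}=(u,v)_{H_0}+(Gu,Gv)_{H_1}$. $\mathrm{BD}(G)$ is the orthogonal complement of $\mathrm{dom}(\mathring G)$ in $\mathrm{dom}(G)$. $\mathrm{dom}(DaG)=\{u\in\mathrm{dom}(G):aGu\in\mathrm{dom}(D)\}$. A bounded operator $M$ is coercive if $\mathrm{Re}(Mx,x)\ge\mu\|x\|^2$ for some $\mu>0$ and all $x$. *)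

theory Defs
  imports "HOL-Analysis.Analysis"
begin

class complex_inner = real_normed_vector +
  fixes scaleC :: "complex \<Rightarrow> 'a \<Rightarrow> 'a" (infixr "*\<^sub>C" 75)
    and cinner :: "'a \<Rightarrow> 'a \<Rightarrow> complex"
  assumes scaleC_add_right: "c *\<^sub>C (x + y) = c *\<^sub>C x + c *\<^sub>C y"
    and scaleC_add_left: "(b + c) *\<^sub>C x = b *\<^sub>C x + c *\<^sub>C x"
    and scaleC_scaleC: "b *\<^sub>C (c *\<^sub>C x) = (b * c) *\<^sub>C x"
    and scaleC_one: "1 *\<^sub>C x = x"
    and scaleR_scaleC: "scaleR r x = complex_of_real r *\<^sub>C x"
    and cinner_commute: "cinner x y = cnj (cinner y x)"
    and cinner_add_left: "cinner (x + y) z = cinner x z + cinner y z"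
    and cinner_scaleC_left: "cinner (c *\<^sub>C x) y = cnj c * cinner x y"
    and cinner_Re_nonneg: "0 \<le> Re (cinner x x)"
    and norm_eq_sqrt_cinner: "norm x = sqrt (Re (cinner x x))"

class chilbert_space = complex_inner + complete_space

section \<open>(Unbounded) linear operators, given by a domain and a map\<close>

definition csubspace :: "'a::complex_inner set \<Rightarrow> bool" where
  "csubspace S \<longleftrightarrow> 0 \<in> S \<and> (\<forall>x\<in>S. \<forall>y\<in>S. x + y \<in> S) \<and> (\<forall>c. \<forall>x\<in>S. c *\<^sub>C x \<in> S)"

definition clinear_on :: "'a::complex_inner set \<Rightarrow> ('a \<Rightarrow> 'b::complex_inner) \<Rightarrow> bool" where
  "clinear_on S f \<longleftrightarrow> (\<forall>x\<in>S. \<forall>y\<in>S. f (x + y) = f x + f y) \<and> (\<forall>c. \<forall>x\<in>S. f (c *\<^sub>C x) = c *\<^sub>C f x)"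

definition densely_defined_closed :: "'a::complex_inner set \<Rightarrow> ('a \<Rightarrow> 'b::complex_inner) \<Rightarrow> bool" where
  "densely_defined_closed S f \<longleftrightarrow> csubspace S \<and> clinear_on S f \<and> closure S = UNIV
     \<and> closed {(x, f x) | x. x \<in> S}"

definition adj_dom :: "'a::complex_inner set \<Rightarrow> ('a \<Rightarrow> 'b::complex_inner) \<Rightarrow> 'b set" where
  "adj_dom S f = {v. \<exists>w. \<forall>u\<in>S. cinner (f u) v = cinner u w}"

definition adj :: "'a::complex_inner set \<Rightarrow> ('a \<Rightarrow> 'b::complex_inner) \<Rightarrow> 'b \<Rightarrow> 'a" where
  "adj S f v = (THE w. \<forall>u\<in>S. cinner (f u) v = cinner u w)"

definition neg_adj_subset :: "'a::complex_inner set \<Rightarrow> ('a \<Rightarrow> 'b::complex_inner) \<Rightarrow> 'b set \<Rightarrow> ('b \<Rightarrow> 'a) \<Rightarrow> bool" where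
  "neg_adj_subset SG G SD D \<longleftrightarrow> adj_dom SG G \<subseteq> SD \<and> (\<forall>v\<in>adj_dom SG G. D v = - adj SG G v)"

text \<open>\<open>dom(G\<^sup>\<circ>)\<close> where \<open>G\<^sup>\<circ> = -D\<^sup>*\<close>: it is the domain of \<open>D\<^sup>*\<close>.\<close>
definition dom_ring :: "'b::complex_inner set \<Rightarrow> ('b \<Rightarrow> 'a::complex_inner) \<Rightarrow> 'a set" where
  "dom_ring SD D = adj_dom SD D"

text \<open>\<open>BD(G)\<close>: orthogonal complement of \<open>dom(G\<^sup>\<circ>)\<close> in \<open>dom(G)\<close> w.r.t. the graph inner product
  \<open>(u,v)_{dom G} = (u,v) + (Gu,Gv)\<close>.\<close>
definition BD :: "'a::complex_inner set \<Rightarrow> ('a \<Rightarrow> 'b::complex_inner) \<Rightarrow> 'b set \<Rightarrow> ('b \<Rightarrow> 'a) \<Rightarrow> 'a set" where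
  "BD SG G SD D = {u \<in> SG. \<forall>v\<in>dom_ring SD D. cinner v u + cinner (G v) (G u) = 0}"

definition dom_DaG :: "'a::complex_inner set \<Rightarrow> ('a \<Rightarrow> 'b::complex_inner) \<Rightarrow> ('b \<Rightarrow> 'b) \<Rightarrow> 'b set \<Rightarrow> 'a set" where
  "dom_DaG SG G a SD = {u \<in> SG. a (G u) \<in> SD}"

definition bounded_clinear :: "('a::complex_inner \<Rightarrow> 'b::complex_inner) \<Rightarrow> bool" where
  "bounded_clinear f \<longleftrightarrow> bounded_linear f \<and> (\<forall>c x. f (c *\<^sub>C x) = c *\<^sub>C f x)"

definition coercive :: "('a::complex_inner \<Rightarrow> 'a) \<Rightarrow> bool" where
  "coercive M \<longleftrightarrow> (\<exists>\<mu>>0. \<forall>x. Re (cinner (M x) x) \<ge> \<mu> * (norm x)\<^sup>2)"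

end

theory Submission
  imports Defs
begin


lemma scaleC_minus1: "(-1) *\<^sub>C (x::'a::complex_inner) = - x"
  using scaleR_scaleC[of "-1" x] by simp

lemma cinner_add_right: "cinner (x::'a::complex_inner) (y + z) = cinner x y + cinner x z"
  by (metis cinner_add_left cinner_commute complex_cnj_add)

lemma cinner_scaleC_right: "cinner (x::'a::complex_inner) (c *\<^sub>C y) = c * cinner x y"
  by (metis cinner_commute cinner_scaleC_left complex_cnj_cnj complex_cnj_mult)

lemma cinner_zero_left[simp]: "cinner (0::'a::complex_inner) y = 0"
  using cinner_add_left[of "0::'a" 0 y] by simp

lemma cinner_zero_right[simp]: "cinner (x::'a::complex_inner) 0 = 0"
  using cinner_add_right[of x "0::'a" 0] by simp

lemma cinner_minus_left: "cinner (- x::'a::complex_inner) y = - cinner x y"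
  using cinner_add_left[of x "-x" y] by (simp add: add_eq_0_iff)

lemma cinner_minus_right: "cinner (x::'a::complex_inner) (- y) = - cinner x y"
  using cinner_add_right[of x y "-y"] by (simp add: add_eq_0_iff)

lemma cinner_diff_left: "cinner (x - z::'a::complex_inner) y = cinner x y - cinner z y"
  using cinner_add_left[of x "-z" y] by (simp add: cinner_minus_left)

lemma cinner_diff_right: "cinner (x::'a::complex_inner) (y - z) = cinner x y - cinner x z"
  using cinner_add_right[of x y "-z"] by (simp add: cinner_minus_right)

lemma cinner_scaleR_left: "cinner (r *\<^sub>R x::'a::complex_inner) y = of_real r * cinner x y"
  by (simp add: scaleR_scaleC cinner_scaleC_left)

lemma cinner_scaleR_right: "cinner (x::'a::complex_inner) (r *\<^sub>R y) = of_real r * cinner x y"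
  by (simp add: scaleR_scaleC cinner_scaleC_right)

lemma Re_cinner_self: "Re (cinner (x::'a::complex_inner) x) = (norm x)^2"
  using norm_eq_sqrt_cinner[of x] cinner_Re_nonneg[of x] by simp

lemma Im_cinner_self: "Im (cinner (x::'a::complex_inner) x) = 0"
proof -
  have "cinner x x = cnj (cinner x x)" by (rule cinner_commute)
  then have "Im (cinner x x) = Im (cnj (cinner x x))" by simp
  then show ?thesis by simp
qed

lemma cinner_self: "cinner (x::'a::complex_inner) x = of_real ((norm x)^2)"
  using Re_cinner_self[of x] Im_cinner_self[of x] by (simp add: complex_eq_iff)

lemma cinner_self_eq_0[simp]: "cinner (x::'a::complex_inner) x = 0 \<longleftrightarrow> x = 0"
  by (simp add: cinner_self)

lemma Re_cinner_commute: "Re (cinner (y::'a::complex_inner) x) = Re (cinner x y)"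
  by (subst cinner_commute) simp

lemma Re_cinner_le: "2 * Re (cinner (x::'a::complex_inner) y) \<le> (norm x)^2 + (norm y)^2"
proof -
  have "0 \<le> Re (cinner (x - y) (x - y))" by (rule cinner_Re_nonneg)
  also have "Re (cinner (x - y) (x - y)) = (norm x)^2 + (norm y)^2 - 2 * Re (cinner x y)"
    by (simp add: cinner_diff_left cinner_diff_right Re_cinner_self Re_cinner_commute[of y x])
  finally show ?thesis by simp
qed

lemma Re_cinner_CS: "Re (cinner (x::'a::complex_inner) y) \<le> norm x * norm y"
proof (cases "x = 0 \<or> y = 0")
  case True then show ?thesis by auto
next
  case False
  then have nx: "norm x > 0" and ny: "norm y > 0" by auto
  have "2 * Re (cinner ((1/norm x) *\<^sub>R x) ((1/norm y) *\<^sub>R y)) \<le> (norm ((1/norm x) *\<^sub>R x))^2 + (norm ((1/norm y) *\<^sub>R y))^2"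
    by (rule Re_cinner_le)
  also have "\<dots> = 2" using nx ny by simp
  finally have "2 * Re (cinner x y) / (norm x * norm y) \<le> 2"
    using nx ny by (simp add: cinner_scaleR_left cinner_scaleR_right mult.commute)
  then show ?thesis using mult_pos_pos[OF nx ny] by (simp add: pos_divide_le_eq)
qed

lemma norm_scaleC: "norm (c *\<^sub>C (x::'a::complex_inner)) = cmod c * norm x"
proof -
  have "(norm (c *\<^sub>C x))^2 = Re (cnj c * c * cinner x x)"
    by (simp only: Re_cinner_self[symmetric] cinner_scaleC_left cinner_scaleC_right mult.assoc mult.left_commute)
  also have "cnj c * c * cinner x x = of_real ((cmod c)^2 * (norm x)^2)"
  proof -
    have "cnj c * c = of_real ((cmod c)^2)" using complex_norm_square[of c] by (simp add: mult.commute)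
    then show ?thesis by (simp only: cinner_self of_real_mult)
  qed
  finally have "(norm (c *\<^sub>C x))^2 = (cmod c * norm x)^2"
    by (simp add: power_mult_distrib)
  then show ?thesis by (simp add: power2_eq_iff_nonneg)
qed

lemma cinner_CS: "cmod (cinner (x::'a::complex_inner) y) \<le> norm x * norm y"
proof (cases "cinner x y = 0")
  case True then show ?thesis by simp
next
  case False
  define B where "B = cinner x y"
  define c where "c = cnj B / of_real (cmod B)"
  have cB: "c * B = of_real (cmod B)"
  proof -
    have "cnj B * B = of_real (cmod B) * of_real (cmod B)"
      by (metis complex_norm_square mult.commute of_real_mult power2_eq_square)
    then show ?thesis using False unfolding c_def B_def[symmetric] by (simp add: field_simps)
  qed
  have cm: "cmod c = 1" using False unfolding c_def B_def by (simp add: norm_divide)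
  have "cmod B = Re (cinner x (c *\<^sub>C y))"
    by (simp add: cinner_scaleC_right B_def[symmetric] cB)
  also have "\<dots> \<le> norm x * norm (c *\<^sub>C y)" by (rule Re_cinner_CS)
  also have "\<dots> = norm x * norm y" by (simp add: norm_scaleC cm)
  finally show ?thesis by (simp add: B_def)
qed

lemma bounded_bilinear_cinner: "bounded_bilinear (cinner :: 'a::complex_inner \<Rightarrow> 'a \<Rightarrow> complex)"
proof
  fix a a' b b' :: 'a and r :: real
  show "cinner (a + a') b = cinner a b + cinner a' b" by (rule cinner_add_left)
  show "cinner b (a + a') = cinner b a + cinner b a'" by (rule cinner_add_right)
  show "cinner (r *\<^sub>R a) b = r *\<^sub>R cinner a b" by (simp add: cinner_scaleR_left scaleR_conv_of_real)
  show "cinner a (r *\<^sub>R b) = r *\<^sub>R cinner a b" by (simp add: cinner_scaleR_right scaleR_conv_of_real)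
  show "\<exists>K. \<forall>a b::'a. norm (cinner a b) \<le> norm a * norm b * K"
    by (rule exI[of _ 1]) (simp add: cinner_CS)
qed

lemmas tendsto_cinner = bounded_bilinear.tendsto[OF bounded_bilinear_cinner]

instantiation prod :: (complex_inner, complex_inner) complex_inner
begin
definition scaleC_prod_def: "c *\<^sub>C x = (c *\<^sub>C fst x, c *\<^sub>C snd x)"
definition cinner_prod_def: "cinner x y = cinner (fst x) (fst y) + cinner (snd x) (snd y)"
instance
proof
  fix x y z :: "'a \<times> 'b" and b c :: complex and r :: real
  show "c *\<^sub>C (x + y) = c *\<^sub>C x + c *\<^sub>C y" by (simp add: scaleC_prod_def scaleC_add_right)
  show "(b + c) *\<^sub>C x = b *\<^sub>C x + c *\<^sub>C x" by (simp add: scaleC_prod_def scaleC_add_left)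
  show "b *\<^sub>C (c *\<^sub>C x) = (b * c) *\<^sub>C x" by (simp add: scaleC_prod_def scaleC_scaleC)
  show "1 *\<^sub>C x = x" by (simp add: scaleC_prod_def scaleC_one)
  show "r *\<^sub>R x = complex_of_real r *\<^sub>C x" by (simp add: scaleC_prod_def scaleR_prod_def scaleR_scaleC)
  show "cinner x y = cnj (cinner y x)" by (simp add: cinner_prod_def cinner_commute[of "fst x"] cinner_commute[of "snd x"])
  show "cinner (x + y) z = cinner x z + cinner y z" by (simp add: cinner_prod_def cinner_add_left)
  show "cinner (c *\<^sub>C x) y = cnj c * cinner x y" by (simp add: cinner_prod_def scaleC_prod_def cinner_scaleC_left distrib_left)
  show "0 \<le> Re (cinner x x)" by (simp add: cinner_prod_def cinner_Re_nonneg)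
  show "norm x = sqrt (Re (cinner x x))" by (simp add: cinner_prod_def norm_prod_def Re_cinner_self)
qed
end

instance prod :: (chilbert_space, chilbert_space) chilbert_space ..

lemma cinner_Pair[simp]: "cinner (a, b) (c, d) = cinner a c + cinner b d"
  by (simp add: cinner_prod_def)


lemma csubspace_scaleR: "csubspace C \<Longrightarrow> x \<in> C \<Longrightarrow> r *\<^sub>R x \<in> C"
  unfolding csubspace_def by (simp add: scaleR_scaleC)

lemma csubspace_minus: "csubspace C \<Longrightarrow> x \<in> C \<Longrightarrow> - x \<in> C"
  unfolding csubspace_def by (metis scaleC_minus1)

lemma csubspace_add: "csubspace C \<Longrightarrow> x \<in> C \<Longrightarrow> y \<in> C \<Longrightarrow> x + y \<in> C"
  unfolding csubspace_def by blast

lemma csubspace_diff: "csubspace C \<Longrightarrow> x \<in> C \<Longrightarrow> y \<in> C \<Longrightarrow> x - y \<in> C"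
  using csubspace_add[of C x "-y"] csubspace_minus[of C y] by simp

lemma csubspace_scaleC: "csubspace C \<Longrightarrow> x \<in> C \<Longrightarrow> c *\<^sub>C x \<in> C"
  unfolding csubspace_def by blast

lemma csubspace_zero: "csubspace C \<Longrightarrow> 0 \<in> C"
  unfolding csubspace_def by blast

lemma norm_diff_sq: "(norm (e - t *\<^sub>R x))^2 = (norm (e::'a::complex_inner))^2 - 2 * t * Re (cinner x e) + t^2 * (norm x)^2"
proof -
  have "(norm (e - t *\<^sub>R x))^2 = Re (cinner (e - t *\<^sub>R x) (e - t *\<^sub>R x))" by (simp add: Re_cinner_self)
  also have "\<dots> = (norm e)^2 - t * Re (cinner e x) - t * Re (cinner x e) + t^2 * (norm x)^2"
    apply (simp add: cinner_diff_left cinner_diff_right cinner_scaleR_left cinner_scaleR_right Re_cinner_self power2_eq_square)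
    by (simp add: algebra_simps)
  finally show ?thesis by (simp add: Re_cinner_commute[of e x])
qed

lemma small_t: assumes "\<And>t::real. t > 0 \<Longrightarrow> 2 * t * r \<le> t^2 * A" "A \<ge> 0" shows "r \<le> (0::real)"
proof (rule ccontr)
  assume "\<not> r \<le> 0"
  then have r: "r > 0" by simp
  define t where "t = r / (A + 1)"
  have t: "t > 0" using r assms(2) by (simp add: t_def)
  have "2 * t * r \<le> t^2 * A" using assms(1) t by simp
  then have "2 * r \<le> t * A" using t by (simp add: power2_eq_square mult.assoc)
  also have "t * A < r" using r assms(2) by (simp add: t_def field_simps)
  finally show False using r by simp
qed

lemma orth_of_min:
  fixes C :: "'a::complex_inner set"
  assumes C: "csubspace C" and c: "c \<in> C" and min: "\<And>y. y \<in> C \<Longrightarrow> norm (h - c) \<le> norm (h - y)"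
    and x: "x \<in> C"
  shows "cinner x (h - c) = 0"
proof -
  have key: "Re (cinner z (h - c)) \<le> 0" if z: "z \<in> C" for z
  proof (rule small_t)
    fix t :: real assume "t > 0"
    have "c + t *\<^sub>R z \<in> C" using C c z by (simp add: csubspace_add csubspace_scaleR)
    then have "norm (h - c) \<le> norm ((h - c) - t *\<^sub>R z)" using min by (simp add: algebra_simps)
    then have "(norm (h - c))^2 \<le> (norm ((h - c) - t *\<^sub>R z))^2" by (simp add: power_mono)
    then show "2 * t * Re (cinner z (h - c)) \<le> t^2 * (norm z)^2" by (simp add: norm_diff_sq)
  qed simp
  have r: "Re (cinner x (h - c)) = 0"
    using key[OF x] key[OF csubspace_minus[OF C x]] by (simp add: cinner_minus_left)
  have "Re (cinner (\<i> *\<^sub>C x) (h - c)) \<le> 0" "Re (cinner (- (\<i> *\<^sub>C x)) (h - c)) \<le> 0"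
    using key C x by (auto intro: csubspace_scaleC csubspace_minus)
  then have i: "Im (cinner x (h - c)) = 0" by (simp add: cinner_minus_left cinner_scaleC_left)
  show ?thesis using r i by (simp add: complex_eq_iff)
qed

lemma parallelogram: "(norm (a + b))^2 + (norm (a - b))^2 = 2 * (norm (a::'a::complex_inner))^2 + 2 * (norm b)^2"
  by (simp add: Re_cinner_self[symmetric] cinner_add_left cinner_add_right cinner_diff_left cinner_diff_right)

lemma aux_hh: "(h - a) + (h - b) = h + h - (a + (b::'a::ab_group_add))" by (simp add: algebra_simps)

lemma proj_exists:
  fixes C :: "'a::chilbert_space set"
  assumes C: "csubspace C" and cl: "closed C"
  shows "\<exists>c\<in>C. \<forall>x\<in>C. cinner x (h - c) = 0"
proof -
  define f where "f c = (norm (h - c))^2" for c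
  define d where "d = Inf (f ` C)"
  have ne: "f ` C \<noteq> {}" using csubspace_zero[OF C] by blast
  have bdd: "bdd_below (f ` C)" unfolding f_def by (rule bdd_belowI[of _ 0]) auto
  have dle: "d \<le> f c" if "c \<in> C" for c unfolding d_def using that bdd by (simp add: cInf_lower)
  have "\<exists>c\<in>C. f c < d + 1 / (real n + 1)" for n
  proof -
    have "Inf (f ` C) < d + 1 / (real n + 1)" unfolding d_def by simp
    then show ?thesis using ne by (simp add: cInf_less_iff[OF ne bdd])
  qed
  then obtain s where sC: "\<And>n. s n \<in> C" and sd: "\<And>n. f (s n) < d + 1 / (real n + 1)" by metis
  have cauchy_bound: "(norm (s m - s n))^2 \<le> 2 / (real n + 1) + 2 / (real m + 1)" for m n
  proof -
    define mid where "mid = (1/2) *\<^sub>R (s n + s m)"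
    have "mid \<in> C" unfolding mid_def using C sC by (simp add: csubspace_add csubspace_scaleR)
    then have "d \<le> f mid" by (rule dle)
    have m2: "2 *\<^sub>R mid = s n + s m" unfolding mid_def by simp
    have e1: "2 *\<^sub>R (h - mid) = 2 *\<^sub>R h - (s n + s m)" by (simp only: scaleR_right_diff_distrib m2)
    have e2: "2 *\<^sub>R h = h + h" by (rule scaleR_2)
    have "(h - s n) + (h - s m) = 2 *\<^sub>R (h - mid)" by (simp only: e1 e2 aux_hh)
    then have "(norm ((h - s n) + (h - s m)))^2 = 4 * f mid" by (simp add: f_def power_mult_distrib)
    moreover have "(h - s n) - (h - s m) = s m - s n" by simp
    ultimately have "4 * f mid + (norm (s m - s n))^2 = 2 * f (s n) + 2 * f (s m)"
      using parallelogram[of "h - s n" "h - s m"] by (simp add: f_def)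
    then show ?thesis using \<open>d \<le> f mid\<close> sd[of n] sd[of m] by linarith
  qed
  have "Cauchy s"
  proof (rule metric_CauchyI)
    fix e :: real assume e: "e > 0"
    obtain N :: nat where N: "4 / (e^2) < real N + 1"
    proof -
      obtain N :: nat where "4 / (e^2) < real N" using reals_Archimedean2 by blast
      then have "4 / (e^2) < real N + 1" by simp
      then show ?thesis using that by blast
    qed
    have N': "4 / (real N + 1) < e^2" using N e by (simp add: field_simps)
    show "\<exists>M. \<forall>m\<ge>M. \<forall>n\<ge>M. dist (s m) (s n) < e"
    proof (intro exI allI impI)
      fix m n assume m: "m \<ge> N" and n: "n \<ge> N"
      have "2 / (real n + 1) \<le> 2 / (real N + 1)" "2 / (real m + 1) \<le> 2 / (real N + 1)"
        using m n by (simp_all add: frac_le)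
      then have "(norm (s m - s n))^2 < e^2" using cauchy_bound[of m n] N' by linarith
      then show "dist (s m) (s n) < e" using e by (simp add: dist_norm power_less_imp_less_base)
    qed
  qed
  then obtain c where lim: "s \<longlonglongrightarrow> c" using Cauchy_convergent convergent_def by blast
  have cC: "c \<in> C" using cl sC lim closed_sequentially by blast
  have "(\<lambda>n. f (s n)) \<longlonglongrightarrow> f c" unfolding f_def by (intro tendsto_intros lim)
  moreover have "(\<lambda>n. d + 1 / (real n + 1)) \<longlonglongrightarrow> d + 0"
  proof -
    have "(\<lambda>n. 1 / (real n + 1)) \<longlonglongrightarrow> 0"
      using LIMSEQ_inverse_real_of_nat by (simp add: inverse_eq_divide add.commute)
    then show ?thesis by (intro tendsto_intros)
  qed
  ultimately have "f c \<le> d + 0" using sd by (intro LIMSEQ_le) (auto intro: less_imp_le)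
  then have "f c \<le> f y" if "y \<in> C" for y using dle[OF that] by simp
  then have "norm (h - c) \<le> norm (h - y)" if "y \<in> C" for y
    using that unfolding f_def by (meson norm_ge_zero power_mono_iff zero_less_numeral)
  then show ?thesis using orth_of_min[OF C cC] cC by blast
qed


lemma cont_cinner_left: "continuous_on UNIV (\<lambda>x::'a::complex_inner. cinner x a)"
  by (rule linear_continuous_on[OF bounded_bilinear.bounded_linear_left[OF bounded_bilinear_cinner]])

lemma cont_cinner_right: "continuous_on UNIV (\<lambda>x::'a::complex_inner. cinner a x)"
  by (rule linear_continuous_on[OF bounded_bilinear.bounded_linear_right[OF bounded_bilinear_cinner]])

lemma closed_orth_left: "closed {x::'a::complex_inner. cinner x a = 0}"
  by (rule closed_Collect_eq[OF cont_cinner_left continuous_on_const])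

lemma closed_orth_right: "closed {x::'a::complex_inner. cinner a x = 0}"
  by (rule closed_Collect_eq[OF cont_cinner_right continuous_on_const])

lemma dense_unique:
  fixes w1 w2 :: "'a::complex_inner"
  assumes S: "closure S = UNIV" and eq: "\<And>x. x \<in> S \<Longrightarrow> cinner x w1 = cinner x w2"
  shows "w1 = w2"
proof -
  have "S \<subseteq> {x. cinner x (w1 - w2) = 0}" using eq by (auto simp: cinner_diff_right)
  then have "closure S \<subseteq> {x. cinner x (w1 - w2) = 0}" by (rule closure_minimal[OF _ closed_orth_left])
  then have "cinner (w1 - w2) (w1 - w2) = 0" using S by blast
  then show ?thesis by simp
qed

lemma adj_prop:
  fixes S :: "'a::complex_inner set" and f :: "'a \<Rightarrow> 'b::complex_inner"
  assumes S: "closure S = UNIV" and v: "v \<in> adj_dom S f" and u: "u \<in> S"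
  shows "cinner (f u) v = cinner u (adj S f v)"
proof -
  obtain w where w: "\<forall>u\<in>S. cinner (f u) v = cinner u w" using v unfolding adj_dom_def by blast
  have "\<forall>u\<in>S. cinner (f u) v = cinner u (adj S f v)"
    unfolding adj_def
  proof (rule theI[of _ w])
    show "\<forall>u\<in>S. cinner (f u) v = cinner u w" by (rule w)
    fix w' assume "\<forall>u\<in>S. cinner (f u) v = cinner u w'"
    then show "w' = w" using w by (intro dense_unique[OF S]) auto
  qed
  then show ?thesis using u by blast
qed

lemma adj_eq:
  fixes S :: "'a::complex_inner set" and f :: "'a \<Rightarrow> 'b::complex_inner"
  assumes S: "closure S = UNIV" and w: "\<And>u. u \<in> S \<Longrightarrow> cinner (f u) v = cinner u w"
  shows "v \<in> adj_dom S f" "adj S f v = w"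
proof -
  show v: "v \<in> adj_dom S f" unfolding adj_dom_def using w by blast
  show "adj S f v = w" using adj_prop[OF S v] w by (intro dense_unique[OF S]) auto
qed

lemma scaleC_zero_left[simp]: "0 *\<^sub>C (x::'a::complex_inner) = 0"
  using scaleC_add_left[of 0 0 x] by simp

lemma scaleC_zero_right[simp]: "c *\<^sub>C (0::'a::complex_inner) = 0"
  using scaleC_add_right[of c "0::'a" 0] by simp

lemma clinear_on_zero: "clinear_on S f \<Longrightarrow> 0 \<in> S \<Longrightarrow> f 0 = 0"
  unfolding clinear_on_def by (metis scaleC_zero_left)

lemma clinear_on_minus: "clinear_on S f \<Longrightarrow> x \<in> S \<Longrightarrow> f (- x) = - f x"
  unfolding clinear_on_def by (metis scaleC_minus1)

lemma clinear_on_add: "clinear_on S f \<Longrightarrow> x \<in> S \<Longrightarrow> y \<in> S \<Longrightarrow> f (x + y) = f x + f y"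
  unfolding clinear_on_def by blast

lemma clinear_on_scaleC: "clinear_on S f \<Longrightarrow> x \<in> S \<Longrightarrow> f (c *\<^sub>C x) = c *\<^sub>C f x"
  unfolding clinear_on_def by blast

lemma clinear_on_diff: "clinear_on S f \<Longrightarrow> csubspace S \<Longrightarrow> x \<in> S \<Longrightarrow> y \<in> S \<Longrightarrow> f (x - y) = f x - f y"
  using clinear_on_add[of S f x "-y"] clinear_on_minus[of S f y] csubspace_minus[of S y] by simp

lemma graph_csubspace:
  assumes "csubspace S" "clinear_on S f"
  shows "csubspace {(x, f x) | x. x \<in> S}"
  unfolding csubspace_def
proof (intro conjI ballI allI)
  show "0 \<in> {(x, f x) | x. x \<in> S}" using assms clinear_on_zero[of S f] csubspace_zero[of S]
    by (auto simp: zero_prod_def)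
  fix p q assume "p \<in> {(x, f x) | x. x \<in> S}" "q \<in> {(x, f x) | x. x \<in> S}"
  then show "p + q \<in> {(x, f x) | x. x \<in> S}" using assms
    by (auto simp: clinear_on_add csubspace_add)
next
  fix c p assume "p \<in> {(x, f x) | x. x \<in> S}"
  then show "c *\<^sub>C p \<in> {(x, f x) | x. x \<in> S}" using assms
    by (auto simp: clinear_on_scaleC csubspace_scaleC scaleC_prod_def)
qed

lemma closed_adj_adj:
  fixes S :: "'a::chilbert_space set" and f :: "'a \<Rightarrow> 'b::chilbert_space"
  assumes ddc: "densely_defined_closed S f"
    and h: "\<And>v. v \<in> adj_dom S f \<Longrightarrow> cinner (adj S f v) y = cinner v w"
  shows "y \<in> S \<and> f y = w"
proof -
  have sub: "csubspace S" and lin: "clinear_on S f" and dense: "closure S = UNIV"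
    and cl: "closed {(x, f x) | x. x \<in> S}" using ddc unfolding densely_defined_closed_def by auto
  obtain p where p: "p \<in> {(x, f x) | x. x \<in> S}" and orth: "\<forall>x\<in>{(x, f x) | x. x \<in> S}. cinner x ((y, w) - p) = 0"
    using proj_exists[OF graph_csubspace[OF sub lin] cl] by blast
  then obtain p0 where p0: "p0 \<in> S" and pe: "p = (p0, f p0)" by blast
  define q0 where "q0 = y - p0"
  define q1 where "q1 = w - f p0"
  have o: "cinner x q0 + cinner (f x) q1 = 0" if "x \<in> S" for x
    using orth that unfolding pe q0_def q1_def by auto
  have "cinner (f x) q1 = cinner x (- q0)" if "x \<in> S" for x
    using o[OF that] by (simp add: cinner_minus_right eq_neg_iff_add_eq_0 add.commute)
  note q1 = adj_eq[OF dense this]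
  have "cinner (adj S f v) p0 = cinner v (f p0)" if "v \<in> adj_dom S f" for v
    using adj_prop[OF dense that p0] by (metis cinner_commute)
  then have hq: "cinner (adj S f v) q0 = cinner v q1" if "v \<in> adj_dom S f" for v
    using h[OF that] that unfolding q0_def q1_def by (simp add: cinner_diff_right)
  have "cinner (- q0) q0 = cinner q1 q1" using hq[OF q1(1)] q1(2) by simp
  then have "- of_real ((norm q0)^2) = (of_real ((norm q1)^2) :: complex)"
    by (simp add: cinner_minus_left cinner_self)
  then have "- ((norm q0)^2) = (norm q1)^2"
    by (metis of_real_eq_iff of_real_minus)
  then have "norm q0 = 0" "norm q1 = 0"
    by (smt (verit) zero_le_power2 power_zero_numeral power2_eq_square norm_ge_zero mult_eq_0_iff)+
  then show ?thesis using p0 unfolding q0_def q1_def by simp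
qed


lemma orth_csubspace: "csubspace {k::'a::complex_inner. \<forall>x\<in>G. cinner x k = 0}"
  unfolding csubspace_def by (auto simp: cinner_add_right cinner_scaleC_right)

lemma orth_closed: "closed {k::'a::complex_inner. \<forall>x\<in>G. cinner x k = 0}"
proof -
  have "{k::'a. \<forall>x\<in>G. cinner x k = 0} = (\<Inter>x\<in>G. {k. cinner x k = 0})" by auto
  then show ?thesis by (simp add: closed_INT closed_orth_right)
qed

lemma aux_mk: "(a - b) + (c - d) = (a + c) - (b + (d::'a::ab_group_add))" by (simp add: algebra_simps)

lemma cauchy_transfer:
  fixes g :: "nat \<Rightarrow> 'a::real_normed_vector" and s :: "nat \<Rightarrow> 'b::real_normed_vector"
  assumes cs: "Cauchy s" and mu: "\<mu> > 0" and b: "\<And>m n. \<mu> * norm (g m - g n) \<le> norm (s m - s n)"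
  shows "Cauchy g"
proof (rule CauchyI)
  fix e :: real assume e: "e > 0"
  have "e * \<mu> > 0" using e mu by simp
  from CauchyD[OF cs this] obtain N where N: "\<forall>m\<ge>N. \<forall>n\<ge>N. norm (s m - s n) < e * \<mu>" by blast
  have "\<forall>m\<ge>N. \<forall>n\<ge>N. norm (g m - g n) < e"
  proof (intro allI impI)
    fix m n assume "m \<ge> N" "n \<ge> N"
    then have "\<mu> * norm (g m - g n) < e * \<mu>" using N b[of m n] by fastforce
    then show "norm (g m - g n) < e" using mu by (simp add: mult.commute)
  qed
  then show "\<exists>N. \<forall>m\<ge>N. \<forall>n\<ge>N. norm (g m - g n) < e" by blast
qed

lemma lax_milgram_like:
  fixes \<Gamma> :: "'a::chilbert_space set" and M :: "'a \<Rightarrow> 'a"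
  assumes sub: "csubspace \<Gamma>" and cl: "closed \<Gamma>" and bl: "bounded_linear M"
    and cl_M: "\<And>c x. M (c *\<^sub>C x) = c *\<^sub>C M x"
    and mu: "\<mu> > 0" and coer: "\<And>x. \<mu> * (norm x)^2 \<le> Re (cinner (M x) x)"
  shows "\<exists>\<gamma>\<in>\<Gamma>. \<exists>k. (\<forall>x\<in>\<Gamma>. cinner x k = 0) \<and> h = M \<gamma> + k"
proof -
  interpret M: bounded_linear M by (rule bl)
  define P where "P = {k::'a. \<forall>x\<in>\<Gamma>. cinner x k = 0}"
  define S where "S = {M \<gamma> + k | \<gamma> k. \<gamma> \<in> \<Gamma> \<and> k \<in> P}"
  have Psub: "csubspace P" unfolding P_def by (rule orth_csubspace)
  have Pcl: "closed P" unfolding P_def by (rule orth_closed)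
  have bound: "\<mu> * norm \<gamma> \<le> norm (M \<gamma> + k)" if g: "\<gamma> \<in> \<Gamma>" and k: "k \<in> P" for \<gamma> k
  proof (cases "\<gamma> = 0")
    case True then show ?thesis by simp
  next
    case False
    have "cinner \<gamma> k = 0" using k g unfolding P_def by blast
    then have "cinner k \<gamma> = 0" by (subst cinner_commute) simp
    then have "Re (cinner (M \<gamma> + k) \<gamma>) = Re (cinner (M \<gamma>) \<gamma>)" by (simp add: cinner_add_left)
    then have "\<mu> * (norm \<gamma>)^2 \<le> norm (M \<gamma> + k) * norm \<gamma>"
      using coer[of \<gamma>] Re_cinner_CS[of "M \<gamma> + k" \<gamma>] by linarith
    then have "(\<mu> * norm \<gamma>) * norm \<gamma> \<le> norm (M \<gamma> + k) * norm \<gamma>"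
      by (simp add: power2_eq_square mult.assoc)
    then show ?thesis using False by (simp add: mult_le_cancel_right)
  qed
  have Ssub: "csubspace S" unfolding csubspace_def S_def
  proof (intro conjI ballI allI)
    show "0 \<in> {M \<gamma> + k | \<gamma> k. \<gamma> \<in> \<Gamma> \<and> k \<in> P}"
      using csubspace_zero[OF sub] csubspace_zero[OF Psub] by (auto intro!: exI[of _ 0])
  next
    fix x y assume "x \<in> {M \<gamma> + k | \<gamma> k. \<gamma> \<in> \<Gamma> \<and> k \<in> P}" "y \<in> {M \<gamma> + k | \<gamma> k. \<gamma> \<in> \<Gamma> \<and> k \<in> P}"
    then obtain g1 k1 g2 k2 where "x = M g1 + k1" "y = M g2 + k2" "g1 \<in> \<Gamma>" "g2 \<in> \<Gamma>" "k1 \<in> P" "k2 \<in> P" by blast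
    then show "x + y \<in> {M \<gamma> + k | \<gamma> k. \<gamma> \<in> \<Gamma> \<and> k \<in> P}"
      by (intro CollectI exI[of _ "g1 + g2"] exI[of _ "k1 + k2"])
         (simp add: M.add csubspace_add[OF sub] csubspace_add[OF Psub] algebra_simps)
  next
    fix c x assume "x \<in> {M \<gamma> + k | \<gamma> k. \<gamma> \<in> \<Gamma> \<and> k \<in> P}"
    then obtain g1 k1 where "x = M g1 + k1" "g1 \<in> \<Gamma>" "k1 \<in> P" by blast
    then show "c *\<^sub>C x \<in> {M \<gamma> + k | \<gamma> k. \<gamma> \<in> \<Gamma> \<and> k \<in> P}"
      by (intro CollectI exI[of _ "c *\<^sub>C g1"] exI[of _ "c *\<^sub>C k1"])
         (simp add: cl_M csubspace_scaleC[OF sub] csubspace_scaleC[OF Psub] scaleC_add_right)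
  qed
  have Scl: "closed S" unfolding closed_sequential_limits
  proof (intro allI impI, elim conjE)
    fix s l assume sS: "\<forall>n. s n \<in> S" and lim: "s \<longlonglongrightarrow> l"
    have ex: "\<exists>q. fst q \<in> \<Gamma> \<and> snd q \<in> P \<and> s n = M (fst q) + snd q" for n
    proof -
      have "s n \<in> S" using sS by blast
      then obtain \<gamma> \<kappa> where "s n = M \<gamma> + \<kappa>" "\<gamma> \<in> \<Gamma>" "\<kappa> \<in> P" unfolding S_def by blast
      then show ?thesis by (intro exI[of _ "(\<gamma>, \<kappa>)"]) simp
    qed
    define f where "f n = (SOME q. fst q \<in> \<Gamma> \<and> snd q \<in> P \<and> s n = M (fst q) + snd q)" for n
    have f: "fst (f n) \<in> \<Gamma> \<and> snd (f n) \<in> P \<and> s n = M (fst (f n)) + snd (f n)" for n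
      unfolding f_def by (rule someI_ex[OF ex])
    define g where "g n = fst (f n)" for n
    define k where "k n = snd (f n)" for n
    have gk: "\<And>n. g n \<in> \<Gamma>" "\<And>n. k n \<in> P" "\<And>n. s n = M (g n) + k n" using f g_def k_def by auto
    have cs: "Cauchy s" using lim by (rule LIMSEQ_imp_Cauchy)
    have bnd: "\<mu> * norm (g m - g n) \<le> norm (s m - s n)" for m n
    proof -
      have gm: "g m - g n \<in> \<Gamma>" by (rule csubspace_diff[OF sub gk(1) gk(1)])
      have km: "k m - k n \<in> P" by (rule csubspace_diff[OF Psub gk(2) gk(2)])
      have eq: "M (g m - g n) + (k m - k n) = s m - s n"
        unfolding gk(3)[of m] gk(3)[of n] M.diff by (rule aux_mk)
      show ?thesis using bound[OF gm km] unfolding eq .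
    qed
    have "Cauchy g" by (rule cauchy_transfer[OF cs mu bnd])
    then have "convergent g" by (rule Cauchy_convergent)
    then obtain g0 where g0: "g \<longlonglongrightarrow> g0" unfolding convergent_def by blast
    have g0G: "g0 \<in> \<Gamma>" by (rule closed_sequentially[OF cl gk(1) g0])
    have B: "(\<lambda>n. s n - M (g n)) \<longlonglongrightarrow> l - M g0" by (rule tendsto_diff[OF lim M.tendsto[OF g0]])
    have A: "\<And>n. s n - M (g n) \<in> P" using gk by simp
    have "l - M g0 \<in> P" by (rule closed_sequentially[OF Pcl A B])
    then show "l \<in> S" unfolding S_def using g0G by (intro CollectI exI[of _ g0] exI[of _ "l - M g0"]) simp
  qed
  obtain c where cS: "c \<in> S" and co: "\<forall>x\<in>S. cinner x (h - c) = 0" using proj_exists[OF Ssub Scl] by blast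
  define r where "r = h - c"
  have rP: "cinner k r = 0" if "k \<in> P" for k
  proof -
    have "k \<in> S" unfolding S_def using that csubspace_zero[OF sub]
      by (intro CollectI exI[of _ 0] exI[of _ k]) simp
    then show ?thesis using co r_def by blast
  qed
  obtain p where pG: "p \<in> \<Gamma>" and po: "\<forall>x\<in>\<Gamma>. cinner x (r - p) = 0" using proj_exists[OF sub cl] by blast
  have rpP: "r - p \<in> P" unfolding P_def using po by blast
  have "cinner p (r - p) = 0" using po pG by blast
  then have "cinner (r - p) p = 0" by (subst cinner_commute) simp
  then have "cinner (r - p) (r - p) = 0" using rP[OF rpP] by (simp add: cinner_diff_right)
  then have rp: "r = p" by simp
  have "M r \<in> S" unfolding S_def using rp pG csubspace_zero[OF Psub]
    by (intro CollectI exI[of _ r] exI[of _ 0]) simp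
  then have "cinner (M r) r = 0" using co r_def by blast
  then have "\<mu> * (norm r)^2 \<le> 0" using coer[of r] by simp
  then have "r = 0" using mu by (simp add: mult_le_0_iff)
  then have "h \<in> S" using cS r_def by simp
  then show ?thesis unfolding S_def P_def by blast
qed


lemma adj_dom_csubspace: "csubspace (adj_dom S f)"
  unfolding csubspace_def adj_dom_def
proof (intro conjI ballI allI CollectI)
  show "\<exists>w. \<forall>u\<in>S. cinner (f u) 0 = cinner u w" by (intro exI[of _ 0]) simp
next
  fix x y assume "x \<in> {v. \<exists>w. \<forall>u\<in>S. cinner (f u) v = cinner u w}" "y \<in> {v. \<exists>w. \<forall>u\<in>S. cinner (f u) v = cinner u w}"
  then obtain w1 w2 where "\<forall>u\<in>S. cinner (f u) x = cinner u w1" "\<forall>u\<in>S. cinner (f u) y = cinner u w2" by blast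
  then show "\<exists>w. \<forall>u\<in>S. cinner (f u) (x + y) = cinner u w"
    by (intro exI[of _ "w1 + w2"]) (simp add: cinner_add_right)
next
  fix c x assume "x \<in> {v. \<exists>w. \<forall>u\<in>S. cinner (f u) v = cinner u w}"
  then obtain w1 where "\<forall>u\<in>S. cinner (f u) x = cinner u w1" by blast
  then show "\<exists>w. \<forall>u\<in>S. cinner (f u) (c *\<^sub>C x) = cinner u w"
    by (intro exI[of _ "c *\<^sub>C w1"]) (simp add: cinner_scaleC_right)
qed

lemma clinear_on_mono: "clinear_on S f \<Longrightarrow> csubspace T \<Longrightarrow> T \<subseteq> S \<Longrightarrow> clinear_on T f"
  unfolding clinear_on_def by blast

lemma V_prop:
  fixes SG :: "'h0::chilbert_space set" and G :: "'h0 \<Rightarrow> 'h1::chilbert_space"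
    and SD :: "'h1 set" and D :: "'h1 \<Rightarrow> 'h0"
  assumes ddcG: "densely_defined_closed SG G" and ddcD: "densely_defined_closed SD D"
    and neg: "neg_adj_subset SG G SD D" and z: "z \<in> adj_dom SD D"
  shows "z \<in> SG \<and> G z = - adj SD D z"
proof (rule closed_adj_adj[OF ddcG])
  have dD: "closure SD = UNIV" using ddcD unfolding densely_defined_closed_def by auto
  fix v assume v: "v \<in> adj_dom SG G"
  then have vD: "v \<in> SD" and Dv: "D v = - adj SG G v" using neg unfolding neg_adj_subset_def by auto
  have e1: "cinner (D v) z = cinner v (adj SD D z)" by (rule adj_prop[OF dD z vD])
  have "cinner (adj SG G v) z = - cinner (D v) z" using Dv by (simp add: cinner_minus_left)
  then show "cinner (adj SG G v) z = cinner v (- adj SD D z)"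
    using e1 by (simp add: cinner_minus_right)
qed

lemma bl_add: assumes "bounded_linear f" shows "f (x + y) = f x + f y"
proof -
  interpret f: bounded_linear f by fact
  show ?thesis by (rule f.add)
qed

lemma bl_diff: assumes "bounded_linear f" shows "f (x - y) = f x - f y"
proof -
  interpret f: bounded_linear f by fact
  show ?thesis by (rule f.diff)
qed

theorem proposition2p11:
  fixes SG :: "'h0::chilbert_space set" and G :: "'h0 \<Rightarrow> 'h1::chilbert_space"
    and SD :: "'h1 set" and D :: "'h1 \<Rightarrow> 'h0"
    and a :: "'h1 \<Rightarrow> 'h1" and m :: "'h0 \<Rightarrow> 'h0" and u0 :: 'h0
  assumes "densely_defined_closed SG G"
    and "densely_defined_closed SD D"
    and "neg_adj_subset SG G SD D"
    and "bounded_clinear a" and "coercive a"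
    and "bounded_clinear m" and "coercive m"
    and "u0 \<in> BD SG G SD D"
  shows "\<exists>!u. u \<in> dom_DaG SG G a SD \<and> m u - D (a (G u)) = 0 \<and> u - u0 \<in> dom_ring SD D"
proof -
  note ddcG = assms(1) and ddcD = assms(2) and neg = assms(3)
  have subG: "csubspace SG" and linG: "clinear_on SG G" using ddcG unfolding densely_defined_closed_def by auto
  have subD: "csubspace SD" and linD: "clinear_on SD D" and dD: "closure SD = UNIV"
    using ddcD unfolding densely_defined_closed_def by auto
  have abl: "bounded_linear a" and acl: "\<And>c x. a (c *\<^sub>C x) = c *\<^sub>C a x" using assms(4) unfolding bounded_clinear_def by auto
  have mbl: "bounded_linear m" and mcl: "\<And>c x. m (c *\<^sub>C x) = c *\<^sub>C m x" using assms(6) unfolding bounded_clinear_def by auto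
  obtain \<mu>a where \<mu>a: "\<mu>a > 0" "\<And>x. Re (cinner (a x) x) \<ge> \<mu>a * (norm x)^2" using assms(5) unfolding coercive_def by auto
  obtain \<mu>m where \<mu>m: "\<mu>m > 0" "\<And>x. Re (cinner (m x) x) \<ge> \<mu>m * (norm x)^2" using assms(7) unfolding coercive_def by auto
  have u0G: "u0 \<in> SG" using assms(8) unfolding BD_def by auto
  define V where "V = adj_dom SD D"
  have subV: "csubspace V" unfolding V_def by (rule adj_dom_csubspace)
  have Vp: "z \<in> SG \<and> G z = - adj SD D z" if "z \<in> V" for z
    using V_prop[OF ddcG ddcD neg] that unfolding V_def by blast
  have VG: "V \<subseteq> SG" using Vp by blast
  define \<Gamma> where "\<Gamma> = {(z, G z) | z. z \<in> V}"
  have sub\<Gamma>: "csubspace \<Gamma>" unfolding \<Gamma>_def by (rule graph_csubspace[OF subV clinear_on_mono[OF linG subV VG]])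
  have cl\<Gamma>: "closed \<Gamma>" unfolding closed_sequential_limits
  proof (intro allI impI, elim conjE)
    fix x l assume xG: "\<forall>n. x n \<in> \<Gamma>" and lim: "x \<longlonglongrightarrow> l"
    have xV: "fst (x n) \<in> V" and xs: "snd (x n) = G (fst (x n))" for n
      using spec[OF xG, of n] unfolding \<Gamma>_def by auto
    have l1: "(\<lambda>n. fst (x n)) \<longlonglongrightarrow> fst l" by (rule tendsto_fst[OF lim])
    have l2: "(\<lambda>n. snd (x n)) \<longlonglongrightarrow> snd l" by (rule tendsto_snd[OF lim])
    have eq: "cinner (D u) (fst l) = cinner u (- snd l)" if u: "u \<in> SD" for u
    proof -
      have e: "cinner (D u) (fst (x n)) = cinner u (- snd (x n))" for n
      proof -
        have "cinner (D u) (fst (x n)) = cinner u (adj SD D (fst (x n)))"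
          using adj_prop[OF dD _ u] xV unfolding V_def by blast
        also have "adj SD D (fst (x n)) = - snd (x n)" using Vp[OF xV[of n]] xs[of n] by simp
        finally show ?thesis .
      qed
      have t1: "(\<lambda>n. cinner (D u) (fst (x n))) \<longlonglongrightarrow> cinner (D u) (fst l)"
        by (rule tendsto_cinner[OF tendsto_const l1])
      have t2: "(\<lambda>n. cinner u (- snd (x n))) \<longlonglongrightarrow> cinner u (- snd l)"
        by (rule tendsto_cinner[OF tendsto_const tendsto_minus[OF l2]])
      show ?thesis using t1 t2 unfolding e by (rule LIMSEQ_unique)
    qed
    note ae = adj_eq[OF dD eq]
    have lV: "fst l \<in> V" using ae(1) unfolding V_def .
    have "G (fst l) = snd l" using Vp[OF lV] ae(2) by simp
    then show "l \<in> \<Gamma>" unfolding \<Gamma>_def using lV by (intro CollectI exI[of _ "fst l"]) simp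
  qed
  define M where "M p = (m (fst p), a (snd p))" for p :: "'h0 \<times> 'h1"
  have Mbl: "bounded_linear M" unfolding M_def
    by (intro bounded_linear_Pair bounded_linear_compose[OF mbl bounded_linear_fst]
        bounded_linear_compose[OF abl bounded_linear_snd])
  have Mcl: "M (c *\<^sub>C p) = c *\<^sub>C M p" for c p unfolding M_def by (simp add: scaleC_prod_def mcl acl)
  define \<mu> where "\<mu> = min \<mu>m \<mu>a"
  have \<mu>: "\<mu> > 0" unfolding \<mu>_def using \<mu>a \<mu>m by simp
  have coer: "\<mu> * (norm p)^2 \<le> Re (cinner (M p) p)" for p
  proof -
    have "(norm p)^2 = (norm (fst p))^2 + (norm (snd p))^2" by (simp add: norm_prod_def)
    moreover have "Re (cinner (M p) p) = Re (cinner (m (fst p)) (fst p)) + Re (cinner (a (snd p)) (snd p))"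
      unfolding M_def by (simp add: cinner_prod_def)
    moreover have "\<mu> * (norm (fst p))^2 \<le> \<mu>m * (norm (fst p))^2" "\<mu> * (norm (snd p))^2 \<le> \<mu>a * (norm (snd p))^2"
      unfolding \<mu>_def by (simp_all add: mult_right_mono)
    ultimately show ?thesis using \<mu>m(2)[of "fst p"] \<mu>a(2)[of "snd p"] by (simp add: distrib_left)
  qed
  define g0 where "g0 = (u0, G u0)"
  obtain \<gamma> k where \<gamma>: "\<gamma> \<in> \<Gamma>" and k: "\<forall>x\<in>\<Gamma>. cinner x k = 0" and hk: "- M g0 = M \<gamma> + k"
    using lax_milgram_like[OF sub\<Gamma> cl\<Gamma> Mbl Mcl \<mu> coer, of "- M g0"] by blast
  obtain w where wV: "w \<in> V" and \<gamma>w: "\<gamma> = (w, G w)" using \<gamma> unfolding \<Gamma>_def by blast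
  have wG: "w \<in> SG" using VG wV by blast
  define u where "u = u0 + w"
  have uG: "u \<in> SG" unfolding u_def by (rule csubspace_add[OF subG u0G wG])
  have Gu: "G u = G u0 + G w" unfolding u_def by (rule clinear_on_add[OF linG u0G wG])
  have MM: "M (u, G u) = M g0 + M \<gamma>" unfolding g0_def \<gamma>w Gu u_def
    using bl_add[OF Mbl, of "(u0, G u0)" "(w, G w)"] Gu[unfolded u_def] by simp
  have h2: "M g0 + (M \<gamma> + k) = 0" using hk by (simp only: neg_eq_iff_add_eq_0)
  have Mu: "M (u, G u) = - k" unfolding MM by (simp only: eq_neg_iff_add_eq_0 add.assoc h2)
  have key: "cinner (adj SD D z) (a (G u)) = cinner z (m u)" if zV: "z \<in> V" for z
  proof -
    have "(z, G z) \<in> \<Gamma>" unfolding \<Gamma>_def using zV by blast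
    then have "cinner (z, G z) (M (u, G u)) = 0" using k Mu by (simp add: cinner_minus_right)
    then have "cinner z (m u) + cinner (G z) (a (G u)) = 0" unfolding M_def by simp
    then show ?thesis using Vp[OF zV] by (simp add: cinner_minus_left add_eq_0_iff)
  qed
  have aGu: "a (G u) \<in> SD \<and> D (a (G u)) = m u"
    by (rule closed_adj_adj[OF ddcD]) (use key in \<open>simp add: V_def\<close>)
  show ?thesis
  proof (rule ex1I[of _ u])
    show "u \<in> dom_DaG SG G a SD \<and> m u - D (a (G u)) = 0 \<and> u - u0 \<in> dom_ring SD D"
      using uG aGu wV unfolding dom_DaG_def dom_ring_def V_def u_def by simp
  next
    fix y assume y: "y \<in> dom_DaG SG G a SD \<and> m y - D (a (G y)) = 0 \<and> y - u0 \<in> dom_ring SD D"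
    have yG: "y \<in> SG" and aGy: "a (G y) \<in> SD" and my: "m y = D (a (G y))" and yV: "y - u0 \<in> V"
      using y unfolding dom_DaG_def dom_ring_def V_def by auto
    define z where "z = y - u"
    have "z = (y - u0) - (u - u0)" unfolding z_def by simp
    then have zV: "z \<in> V" using csubspace_diff[OF subV yV] wV unfolding u_def by simp
    have Gz: "G z = G y - G u" unfolding z_def by (rule clinear_on_diff[OF linG subG yG uG])
    have aGz: "a (G z) = a (G y) - a (G u)" unfolding Gz by (rule bl_diff[OF abl])
    have "D (a (G z)) = D (a (G y)) - D (a (G u))"
      unfolding aGz by (rule clinear_on_diff[OF linD subD aGy conjunct1[OF aGu]])
    also have "\<dots> = m y - m u" using my aGu by simp
    also have "\<dots> = m z" unfolding z_def by (rule bl_diff[OF mbl, symmetric])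
    finally have Daz: "D (a (G z)) = m z" .
    have aGzD: "a (G z) \<in> SD" unfolding aGz by (rule csubspace_diff[OF subD aGy conjunct1[OF aGu]])
    have "cinner (m z) z = cinner (a (G z)) (adj SD D z)"
      unfolding Daz[symmetric] by (rule adj_prop[OF dD zV[unfolded V_def] aGzD])
    also have "\<dots> = - cinner (a (G z)) (G z)" using Vp[OF zV] by (simp add: cinner_minus_right)
    finally have "Re (cinner (m z) z) = - Re (cinner (a (G z)) (G z))" by simp
    then have "\<mu>m * (norm z)^2 \<le> - (\<mu>a * (norm (G z))^2)" using \<mu>m(2)[of z] \<mu>a(2)[of "G z"] by linarith
    moreover have "0 \<le> \<mu>a * (norm (G z))^2" using \<mu>a by simp
    ultimately have "\<mu>m * (norm z)^2 \<le> 0" by linarith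
    then have "z = 0" using \<mu>m(1) by (simp add: mult_le_0_iff)
    then show "y = u" unfolding z_def by simp
  qed
qed

end
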